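(* Let $G$ be an interval graph with interval representation $\{I_u\}_{u\in V(G)}$. Let $D$ be the digraph with $V(D)=E(G)$ whose arcs are given by the interval nest representation $\{(S_e,T_e)\}_{e\in V(D)}$ where, for $e=uv\in E(G)$, $S_e=I_u\cup I_v$ and $T_e=I_u\cap I_v$; that is, for distinct $e,e'\in E(G)$, $(e,e')$ is an arc of $D$ iff $S_e\cap T_{e'}\neq\emptyset$. Then for any $S\subseteq E(G)$, $S$ is a strong independent set in $D$ if and only if $S$ is a uniquely restricted matching in $G$.
   Context: Graphs are finite, simple, undirected. An interval representation of a graph $G$ is a family $\{I_u\}_{u\in V(G)}$ of closed real intervals with $uv\in E(G)$ iff $I_u\cap I_v\neq\emptyset$ for distinct $u,v$; interval graphs are those having one. (For an edge $uv$, $I_u\cap I_v\ne\emptyset$ so $I_u\cup I_v$ and $I_u\cap I_v$ are intervals.) A matching is a set of pairwise vertex-disjoint edges; it is uniquely restricted if no other matching of $G$ matches exactly the same vertex set. In a digraph, a set $S$ of vertices is a strong independent set if for any two $u,v\in S$, $(u,v)$ or $(v,u)$ is not an arc. *)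

theory Defs
  imports Complex_Main
begin

definition closed_interval :: "real set \<Rightarrow> bool" where
  "closed_interval A \<longleftrightarrow> (\<exists>a b. a \<le> b \<and> A = {a..b})"

definition interval_edges :: "'a set \<Rightarrow> ('a \<Rightarrow> real set) \<Rightarrow> 'a set set" where
  "interval_edges V I = {{u, v} | u v. u \<in> V \<and> v \<in> V \<and> u \<noteq> v \<and> I u \<inter> I v \<noteq> {}}"

definition nestS :: "('a \<Rightarrow> real set) \<Rightarrow> 'a set \<Rightarrow> real set" where
  "nestS I e = (\<Union>u\<in>e. I u)"

definition nestT :: "('a \<Rightarrow> real set) \<Rightarrow> 'a set \<Rightarrow> real set" where
  "nestT I e = (\<Inter>u\<in>e. I u)"

definition nest_arc :: "'a set set \<Rightarrow> ('a \<Rightarrow> real set) \<Rightarrow> 'a set \<Rightarrow> 'a set \<Rightarrow> bool" where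
  "nest_arc E I e e' \<longleftrightarrow> e \<in> E \<and> e' \<in> E \<and> e \<noteq> e' \<and> nestS I e \<inter> nestT I e' \<noteq> {}"

definition strong_independent :: "('b \<Rightarrow> 'b \<Rightarrow> bool) \<Rightarrow> 'b set \<Rightarrow> bool" where
  "strong_independent arc S \<longleftrightarrow> (\<forall>x\<in>S. \<forall>y\<in>S. \<not> arc x y \<or> \<not> arc y x)"

definition matching :: "'a set set \<Rightarrow> 'a set set \<Rightarrow> bool" where
  "matching E M \<longleftrightarrow> M \<subseteq> E \<and> (\<forall>e\<in>M. \<forall>f\<in>M. e \<noteq> f \<longrightarrow> e \<inter> f = {})"

definition uniquely_restricted_matching :: "'a set set \<Rightarrow> 'a set set \<Rightarrow> bool" where
  "uniquely_restricted_matching E M \<longleftrightarrow> matching E M \<and>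
     (\<forall>M'. matching E M' \<and> \<Union>M' = \<Union>M \<longrightarrow> M' = M)"

end

theory Submission
  imports Defs
begin

lemma nestS2[simp]: "nestS I {a,b} = I a \<union> I b" by (auto simp: nestS_def)
lemma nestT2[simp]: "nestT I {a,b} = I a \<inter> I b" by (auto simp: nestT_def)

lemma edge_obtain:
  assumes "e \<in> interval_edges V I" "x \<in> e"
  shows "\<exists>y. e = {x,y} \<and> x \<noteq> y \<and> x \<in> V \<and> y \<in> V \<and> I x \<inter> I y \<noteq> {}"
  using assms unfolding interval_edges_def by (auto simp: insert_commute Int_commute)

lemma edge_intro: "x\<in>V \<Longrightarrow> y\<in>V \<Longrightarrow> x\<noteq>y \<Longrightarrow> I x \<inter> I y \<noteq> {} \<Longrightarrow> {x,y} \<in> interval_edges V I"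
  unfolding interval_edges_def by blast

lemma edge_ne: "e \<in> interval_edges V I \<Longrightarrow> e \<noteq> {}"
  unfolding interval_edges_def by auto

lemma edge_fin: "e \<in> interval_edges V I \<Longrightarrow> finite e"
  unfolding interval_edges_def by auto

lemma edges_fin: "finite V \<Longrightarrow> finite (interval_edges V I)"
proof -
  assume "finite V"
  moreover have "interval_edges V I \<subseteq> Pow V" unfolding interval_edges_def by auto
  ultimately show ?thesis by (meson finite_Pow_iff finite_subset)
qed

lemma matching_subset: "matching E M \<Longrightarrow> N \<subseteq> M \<Longrightarrow> matching E N"
  unfolding matching_def by blast

lemma matching_same: "matching E M \<Longrightarrow> e \<in> M \<Longrightarrow> f \<in> M \<Longrightarrow> x \<in> e \<Longrightarrow> x \<in> f \<Longrightarrow> e = f"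
  unfolding matching_def by blast

lemma union_minus: "matching E M \<Longrightarrow> e \<in> M \<Longrightarrow> \<Union>(M - {e}) = \<Union>M - e"
  unfolding matching_def by blast

context
  fixes V :: "'a set" and I :: "'a \<Rightarrow> real set" and l r :: "'a \<Rightarrow> real"
  assumes iv: "\<forall>u\<in>V. l u \<le> r u \<and> I u = {l u..r u}"
begin

lemma memI: "u \<in> V \<Longrightarrow> p \<in> I u \<longleftrightarrow> l u \<le> p \<and> p \<le> r u"
  using iv by auto

lemma interI: "u\<in>V \<Longrightarrow> v\<in>V \<Longrightarrow> I u \<inter> I v \<noteq> {} \<longleftrightarrow> l u \<le> r v \<and> l v \<le> r u"
proof -
  assume u: "u\<in>V" and v: "v\<in>V"
  have lr: "l u \<le> r u" "l v \<le> r v" using iv u v by auto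
  show ?thesis
  proof
    assume "I u \<inter> I v \<noteq> {}"
    then obtain p where "p \<in> I u" "p \<in> I v" by blast
    then show "l u \<le> r v \<and> l v \<le> r u" using memI[OF u] memI[OF v] by auto
  next
    assume h: "l u \<le> r v \<and> l v \<le> r u"
    have "max (l u) (l v) \<in> I u" "max (l u) (l v) \<in> I v"
      using memI[OF u] memI[OF v] h lr by auto
    then show "I u \<inter> I v \<noteq> {}" by blast
  qed
qed

lemma mutual:
  assumes "{x,y} \<in> interval_edges V I" "{z,w} \<in> interval_edges V I" "{x,y} \<noteq> {z,w}"
    "x\<in>V" "y\<in>V" "z\<in>V" "w\<in>V"
    "l y \<le> r x" "l z \<le> r x" "r x \<le> r y" "r x \<le> r z" "r x \<le> r w" "l w \<le> r z" "l z \<le> r w"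
    "l w \<le> r y"
  shows "nest_arc (interval_edges V I) I {x,y} {z,w} \<and> nest_arc (interval_edges V I) I {z,w} {x,y}"
proof -
  have lr: "l x \<le> r x" "l y \<le> r y" "l z \<le> r z" "l w \<le> r w" using iv assms by auto
  have p1: "r x \<in> I x" "r x \<in> I y" "r x \<in> I z"
    using memI assms lr by auto
  define q where "q = max (l y) (max (l z) (l w))"
  have p2: "q \<in> I y" "q \<in> I z" "q \<in> I w"
    using memI assms lr unfolding q_def by auto
  show ?thesis unfolding nest_arc_def using assms p1 p2 by auto
qed

lemma key:
  assumes "finite M" "matching (interval_edges V I) M" "matching (interval_edges V I) M'"
    "\<Union>M' = \<Union>M" "M' \<noteq> M"
  shows "\<exists>e\<in>M. \<exists>f\<in>M. nest_arc (interval_edges V I) I e f \<and> nest_arc (interval_edges V I) I f e"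
  using assms
proof (induction "card M" arbitrary: M M' rule: less_induct)
  case less
  let ?E = "interval_edges V I"
  have ME: "M \<subseteq> ?E" "M' \<subseteq> ?E" using less.prems by (auto simp: matching_def)
  have Mne: "M \<noteq> {}"
  proof
    assume "M = {}"
    then have "\<Union>M' = {}" using less.prems by simp
    moreover have "\<forall>g\<in>M'. g \<noteq> {}" using ME(2) edge_ne by blast
    ultimately have "M' = {}" by auto
    with \<open>M = {}\<close> less.prems show False by simp
  qed
  define W where "W = \<Union>M"
  have finW: "finite W" unfolding W_def using less.prems(1) ME(1) edge_fin by blast
  have WNE: "W \<noteq> {}" unfolding W_def using Mne ME(1) edge_ne by blast
  have "Min (r ` W) \<in> r ` W" using finW WNE by simp
  then obtain x where xW: "x \<in> W" and xm: "r x = Min (r ` W)" by auto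
  have xmin: "\<forall>v\<in>W. r x \<le> r v" using xm finW by simp
  obtain e where e: "e \<in> M" "x \<in> e" using xW W_def by auto
  obtain y where ey: "e = {x,y}" "x\<noteq>y" "x\<in>V" "y\<in>V" "I x \<inter> I y \<noteq> {}"
    using edge_obtain[OF subsetD[OF ME(1) e(1)] e(2)] by blast
  show ?case
  proof (cases "e \<in> M'")
    case True
    have u1: "\<Union>(M - {e}) = \<Union>M - e" using union_minus less.prems e by blast
    have u2: "\<Union>(M' - {e}) = \<Union>M' - e" using union_minus less.prems True by blast
    have ne: "M' - {e} \<noteq> M - {e}" using True e(1) less.prems(5) by blast
    have c: "card (M - {e}) < card M" using card_Diff1_less[OF less.prems(1) e(1)] .
    have "\<exists>a\<in>M - {e}. \<exists>b\<in>M - {e}. nest_arc ?E I a b \<and> nest_arc ?E I b a"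
    proof -
      have f1: "finite (M - {e})" using less.prems(1) by simp
      have m1: "matching ?E (M - {e})" using matching_subset[OF less.prems(2)] by blast
      have m2: "matching ?E (M' - {e})" using matching_subset[OF less.prems(3)] by blast
      have un: "\<Union>(M' - {e}) = \<Union>(M - {e})" using u1 u2 less.prems(4) by simp
      show ?thesis by (rule less.hyps[OF c f1 m1 m2 un ne])
    qed
    then show ?thesis by blast
  next
    case False
    have "x \<in> \<Union>M'" using xW W_def less.prems by simp
    then obtain g where g: "g \<in> M'" "x \<in> g" by auto
    obtain z where gz: "g = {x,z}" "x\<noteq>z" "z\<in>V" "I x \<inter> I z \<noteq> {}"
      using edge_obtain[OF subsetD[OF ME(2) g(1)] g(2)] by blast
    have zy: "z \<noteq> y" using False g gz ey by auto
    have "y \<in> \<Union>M'" using e ey W_def less.prems by auto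
    then obtain h where h: "h \<in> M'" "y \<in> h" by auto
    obtain u where hu: "h = {y,u}" "y\<noteq>u" "u\<in>V" "I y \<inter> I u \<noteq> {}"
      using edge_obtain[OF subsetD[OF ME(2) h(1)] h(2)] by blast
    have hg: "h \<noteq> g" using h gz zy ey by auto
    have ux: "u \<noteq> x" "u \<noteq> z" using matching_same[OF less.prems(3)] g h hg gz hu by blast+
    have "z \<in> \<Union>M" using g gz less.prems by auto
    then obtain f where f: "f \<in> M" "z \<in> f" by auto
    obtain w where fw: "f = {z,w}" "z\<noteq>w" "w\<in>V" "I z \<inter> I w \<noteq> {}"
      using edge_obtain[OF subsetD[OF ME(1) f(1)] f(2)] by blast
    have fe: "f \<noteq> e" using f ey zy gz by auto
    have wxy: "w \<noteq> x" "w \<noteq> y" using matching_same[OF less.prems(2)] e f fe fw ey by blast+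
    have yin: "y \<in> e" using ey(1) by simp
    have win: "w \<in> f" using fw(1) by simp
    have uin: "u \<in> h" using hu(1) by simp
    have inW: "y \<in> W" "z \<in> W" "u \<in> W" "w \<in> W"
    proof -
      show "y \<in> W" unfolding W_def using e(1) yin by blast
      show "z \<in> W" unfolding W_def using f by blast
      show "w \<in> W" unfolding W_def using f(1) win by blast
      have "u \<in> \<Union>M'" using h(1) uin by blast
      then show "u \<in> W" unfolding W_def using less.prems(4) by simp
    qed
    have rr: "r x \<le> r y" "r x \<le> r z" "r x \<le> r u" "r x \<le> r w" using xmin inW by auto
    have ints: "l x \<le> r y" "l y \<le> r x" "l x \<le> r z" "l z \<le> r x" "l y \<le> r u" "l u \<le> r y"
      "l z \<le> r w" "l w \<le> r z"
      using interI[OF ey(3) ey(4), THEN iffD1, OF ey(5)]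
        interI[OF ey(3) gz(3), THEN iffD1, OF gz(4)]
        interI[OF ey(4) hu(3), THEN iffD1, OF hu(4)]
        interI[OF gz(3) fw(3), THEN iffD1, OF fw(4)] by auto
    show ?thesis
    proof (cases "u = w \<or> I z \<inter> I u = {}")
      case True
      have "l w \<le> r y"
      proof (cases "u = w")
        case True then show ?thesis using ints by simp
      next
        case False
        then have "I z \<inter> I u = {}" using \<open>u = w \<or> I z \<inter> I u = {}\<close> by simp
        then have "\<not> (l z \<le> r u \<and> l u \<le> r z)" using interI[OF gz(3) hu(3)] by blast
        then show ?thesis using ints rr by linarith
      qed
      note lwy = this
      have "nest_arc ?E I {x,y} {z,w} \<and> nest_arc ?E I {z,w} {x,y}"
      proof -
        have eE: "{x,y} \<in> ?E" using ME(1) e(1) ey(1) by blast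
        have fE: "{z,w} \<in> ?E" using ME(1) f(1) fw(1) by blast
        have efne: "{x,y} \<noteq> {z,w}" using fe ey(1) fw(1) by simp
        show ?thesis by (rule mutual[OF eE fE efne ey(3) ey(4) gz(3) fw(3) ints(2) ints(4) rr(1) rr(2) rr(4) ints(8) ints(7) lwy])
      qed
      then show ?thesis using e f ey fw by blast
    next
      case False
      then have uw: "u \<noteq> w" and zu: "I z \<inter> I u \<noteq> {}" by auto
      define N where "N = (M' - {g,h}) \<union> {{z,u}}"
      have zuE: "{z,u} \<in> ?E" using edge_intro[OF gz(3) hu(3)] zu ux by blast
      have notin: "\<forall>k\<in>M' - {g,h}. z \<notin> k \<and> u \<notin> k"
      proof
        fix k assume k: "k \<in> M' - {g,h}"
        then have "k \<inter> g = {}" "k \<inter> h = {}" using less.prems(3) g h unfolding matching_def by auto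
        then show "z \<notin> k \<and> u \<notin> k" using gz hu by auto
      qed
      have sub: "N \<subseteq> ?E" using ME(2) zuE unfolding N_def by auto
      have dis: "\<forall>a\<in>N. \<forall>b\<in>N. a \<noteq> b \<longrightarrow> a \<inter> b = {}"
      proof (intro ballI impI)
        fix a b assume ab: "a \<in> N" "b \<in> N" "a \<noteq> b"
        consider "a \<in> M'" "b \<in> M'" | "a \<in> M' - {g,h}" "b = {z,u}"
          | "a = {z,u}" "b \<in> M' - {g,h}" | "a = {z,u}" "b = {z,u}"
          using ab(1,2) unfolding N_def by blast
        then show "a \<inter> b = {}"
        proof cases
          case 1 then show ?thesis using less.prems(3) ab(3) unfolding matching_def by blast
        next
          case 2 then show ?thesis using notin by auto
        next
          case 3 then show ?thesis using notin by auto
        next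
          case 4 then show ?thesis using ab(3) by auto
        qed
      qed
      have mN: "matching ?E N" unfolding matching_def using sub dis by blast
      have kd: "\<forall>k\<in>M' - {g,h}. k \<inter> g = {} \<and> k \<inter> h = {}"
      proof
        fix k assume "k \<in> M' - {g,h}"
        then have k: "k \<in> M'" "k \<noteq> g" "k \<noteq> h" by auto
        have md: "\<forall>a\<in>M'. \<forall>b\<in>M'. a \<noteq> b \<longrightarrow> a \<inter> b = {}"
          using less.prems(3) unfolding matching_def by blast
        show "k \<inter> g = {} \<and> k \<inter> h = {}" using md k g(1) h(1) by blast
      qed
      have uN0: "\<Union>(M' - {g,h}) = \<Union>M' - g - h"
      proof
        show "\<Union>(M' - {g,h}) \<subseteq> \<Union>M' - g - h" using kd by blast
        show "\<Union>M' - g - h \<subseteq> \<Union>(M' - {g,h})" by blast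
      qed
      have uN: "\<Union>N = \<Union>(M - {e})"
      proof -
        have "\<Union>N = (\<Union>M' - g - h) \<union> {z,u}" unfolding N_def using uN0 by auto
        also have "\<dots> = \<Union>M - {x,y}"
        proof -
          have zU: "z \<in> \<Union>M" "u \<in> \<Union>M" using inW unfolding W_def by auto
          show ?thesis unfolding less.prems(4) gz(1) hu(1) using zU ux zy gz(2) hu(2) by blast
        qed
        also have "\<dots> = \<Union>(M - {e})" using union_minus less.prems(2) e ey by blast
        finally show ?thesis .
      qed
      have neN: "N \<noteq> M - {e}"
      proof
        assume "N = M - {e}"
        then have "{z,u} \<in> M" unfolding N_def by auto
        then have "{z,u} = f" using matching_same[OF less.prems(2)] f by blast
        then show False using fw uw ux by auto
      qed
      have c: "card (M - {e}) < card M" using card_Diff1_less[OF less.prems(1) e(1)] .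
      have "\<exists>a\<in>M - {e}. \<exists>b\<in>M - {e}. nest_arc ?E I a b \<and> nest_arc ?E I b a"
      proof -
        have f1: "finite (M - {e})" using less.prems(1) by simp
        have m1: "matching ?E (M - {e})" using matching_subset[OF less.prems(2)] by blast
        show ?thesis by (rule less.hyps[OF c f1 m1 mN uN neN])
      qed
      then show ?thesis by blast
    qed
  qed
qed

end

theorem theorem9:
  fixes V :: "'a set" and I :: "'a \<Rightarrow> real set" and S :: "'a set set"
  assumes "finite V"
    and "\<forall>u\<in>V. closed_interval (I u)"
    and "S \<subseteq> interval_edges V I"
  shows "strong_independent (nest_arc (interval_edges V I) I) S \<longleftrightarrow>
         uniquely_restricted_matching (interval_edges V I) S"
proof -
  let ?E = "interval_edges V I"
  have ex: "\<forall>u\<in>V. \<exists>p. fst p \<le> snd p \<and> I u = {fst p..snd p}"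
    using assms(2) unfolding closed_interval_def by auto
  obtain F where F: "\<forall>u\<in>V. fst (F u) \<le> snd (F u) \<and> I u = {fst (F u)..snd (F u)}"
    using bchoice[OF ex] by blast
  define l where "l = (\<lambda>u. fst (F u))"
  define r where "r = (\<lambda>u. snd (F u))"
  have iv: "\<forall>u\<in>V. l u \<le> r u \<and> I u = {l u..r u}" using F l_def r_def by auto
  have finS: "finite S" using edges_fin[OF assms(1)] assms(3) finite_subset by blast
  show ?thesis
  proof
    assume SI: "strong_independent (nest_arc ?E I) S"
    have mS: "matching ?E S"
      unfolding matching_def
    proof (intro conjI assms(3) ballI impI)
      fix e f assume ef: "e \<in> S" "f \<in> S" "e \<noteq> f"
      show "e \<inter> f = {}"
      proof (rule ccontr)
        assume "e \<inter> f \<noteq> {}"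
        then obtain a where a: "a \<in> e" "a \<in> f" by blast
        obtain b where eb: "e = {a,b}" "I a \<inter> I b \<noteq> {}" using edge_obtain[OF subsetD[OF assms(3) ef(1)] a(1)] by blast
        obtain c where fc: "f = {a,c}" "I a \<inter> I c \<noteq> {}" using edge_obtain[OF subsetD[OF assms(3) ef(2)] a(2)] by blast
        obtain p where p: "p \<in> I a \<inter> I c" using fc by blast
        obtain q where q: "q \<in> I a \<inter> I b" using eb by blast
        have eE: "e \<in> ?E" "f \<in> ?E" using assms(3) ef by auto
        have p1: "p \<in> nestS I e" "p \<in> nestT I f" using p eb(1) fc(1) by auto
        have q1: "q \<in> nestS I f" "q \<in> nestT I e" using q eb(1) fc(1) by auto
        have "nest_arc ?E I e f" unfolding nest_arc_def using eE ef(3) p1 by blast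
        moreover have "nest_arc ?E I f e" unfolding nest_arc_def using eE ef(3) q1 by blast
        ultimately show False using SI ef unfolding strong_independent_def by blast
      qed
    qed
    show "uniquely_restricted_matching ?E S"
      unfolding uniquely_restricted_matching_def
    proof (intro conjI mS allI impI)
      fix M' assume M': "matching ?E M' \<and> \<Union>M' = \<Union>S"
      show "M' = S"
      proof (rule ccontr)
        assume "M' \<noteq> S"
        have m': "matching ?E M'" and u': "\<Union>M' = \<Union>S" using M' by auto
        have "\<exists>a\<in>S. \<exists>b\<in>S. nest_arc ?E I a b \<and> nest_arc ?E I b a"
          using key[OF iv finS mS m' u' \<open>M' \<noteq> S\<close>] .
        then show False using SI unfolding strong_independent_def by blast
      qed
    qed
  next
    assume U: "uniquely_restricted_matching ?E S"
    then have mS: "matching ?E S" unfolding uniquely_restricted_matching_def by blast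
    show "strong_independent (nest_arc ?E I) S"
      unfolding strong_independent_def
    proof (intro ballI)
      fix e f assume ef: "e \<in> S" "f \<in> S"
      show "\<not> nest_arc ?E I e f \<or> \<not> nest_arc ?E I f e"
      proof (rule ccontr)
        assume "\<not> (\<not> nest_arc ?E I e f \<or> \<not> nest_arc ?E I f e)"
        then have a1: "nest_arc ?E I e f" and a2: "nest_arc ?E I f e" by auto
        have neq: "e \<noteq> f" using a1 unfolding nest_arc_def by blast
        have disj: "e \<inter> f = {}" using mS ef neq unfolding matching_def by blast
        obtain p where p: "p \<in> nestS I e" "p \<in> nestT I f" using a1 unfolding nest_arc_def by blast
        obtain q where q: "q \<in> nestS I f" "q \<in> nestT I e" using a2 unfolding nest_arc_def by blast
        obtain u where u: "u \<in> e" "p \<in> I u" using p(1) unfolding nestS_def by blast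
        obtain v where v: "v \<in> f" "q \<in> I v" using q(1) unfolding nestS_def by blast
        obtain u' where eu: "e = {u,u'}" "u \<noteq> u'" "u\<in>V" "u'\<in>V"
          using edge_obtain[OF subsetD[OF assms(3) ef(1)] u(1)] by blast
        obtain v' where fv: "f = {v,v'}" "v \<noteq> v'" "v\<in>V" "v'\<in>V"
          using edge_obtain[OF subsetD[OF assms(3) ef(2)] v(1)] by blast
        have pv': "p \<in> I u \<inter> I v'" using p u fv by auto
        have qu': "q \<in> I v \<inter> I u'" using q v eu by auto
        have dd: "u \<noteq> v" "u \<noteq> v'" "u' \<noteq> v" "u' \<noteq> v'" using disj eu fv by auto
        have "I u \<inter> I v' \<noteq> {}" using pv' by blast
        then have E1: "{u,v'} \<in> ?E" using edge_intro[OF eu(3) fv(4) dd(2)] by blast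
        have "I u' \<inter> I v \<noteq> {}" using qu' by blast
        then have E2: "{u',v} \<in> ?E" using edge_intro[OF eu(4) fv(3) dd(3)] by blast
        define M' where "M' = (S - {e,f}) \<union> {{u,v'},{u',v}}"
        have notin: "\<forall>k\<in>S - {e,f}. u \<notin> k \<and> u' \<notin> k \<and> v \<notin> k \<and> v' \<notin> k"
        proof
          fix k assume k: "k \<in> S - {e,f}"
          then have "k \<inter> e = {}" "k \<inter> f = {}" using mS ef unfolding matching_def by auto
          then show "u \<notin> k \<and> u' \<notin> k \<and> v \<notin> k \<and> v' \<notin> k" using eu fv by auto
        qed
        have sub: "M' \<subseteq> ?E" using assms(3) E1 E2 unfolding M'_def by auto
        have dis: "\<forall>a\<in>M'. \<forall>b\<in>M'. a \<noteq> b \<longrightarrow> a \<inter> b = {}"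
        proof (intro ballI impI)
          fix a b assume ab: "a \<in> M'" "b \<in> M'" "a \<noteq> b"
          have A: "a \<in> S - {e,f} \<or> a \<in> {{u,v'},{u',v}}" using ab(1) unfolding M'_def by blast
          have B: "b \<in> S - {e,f} \<or> b \<in> {{u,v'},{u',v}}" using ab(2) unfolding M'_def by blast
          have mdS: "\<forall>a\<in>S. \<forall>b\<in>S. a \<noteq> b \<longrightarrow> a \<inter> b = {}" using mS unfolding matching_def by blast
          have c1: "a \<in> S - {e,f} \<Longrightarrow> b \<in> S - {e,f} \<Longrightarrow> a \<inter> b = {}" using mdS ab(3) by blast
          have c2: "a \<in> S - {e,f} \<Longrightarrow> b \<in> {{u,v'},{u',v}} \<Longrightarrow> a \<inter> b = {}" using notin by auto
          have c3: "a \<in> {{u,v'},{u',v}} \<Longrightarrow> b \<in> S - {e,f} \<Longrightarrow> a \<inter> b = {}" using notin by auto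
          have d1: "{u,v'} \<inter> {u',v} = {}" using dd eu(2) fv(2) by auto
          have c4: "a \<in> {{u,v'},{u',v}} \<Longrightarrow> b \<in> {{u,v'},{u',v}} \<Longrightarrow> a \<inter> b = {}"
          proof -
            assume "a \<in> {{u,v'},{u',v}}" "b \<in> {{u,v'},{u',v}}"
            with ab(3) have "(a = {u,v'} \<and> b = {u',v}) \<or> (a = {u',v} \<and> b = {u,v'})" by auto
            then show ?thesis using d1 by auto
          qed
          show "a \<inter> b = {}" using A B c1 c2 c3 c4 by argo
        qed
        have mM: "matching ?E M'" unfolding matching_def using sub dis by blast
        have uS: "\<Union>S = \<Union>(S - {e,f}) \<union> e \<union> f" using ef by blast
        have uM: "\<Union>M' = \<Union>S" unfolding M'_def uS eu(1) fv(1) by blast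
        have "M' \<noteq> S"
        proof
          assume "M' = S"
          then have "{u,v'} \<in> S" unfolding M'_def by auto
          then have "{u,v'} = e" using matching_same[OF mS] ef eu by blast
          then show False using eu dd by auto
        qed
        then show False using U mM uM unfolding uniquely_restricted_matching_def by blast
      qed
    qed
  qed
qed

end
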